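(* Fix an integer $q\ge 2$ and let $\theta = 1-q^{-1}$. There is a constant $C_q>0$ such that \[ \lim_{n\to\infty}\ \sup_{t}\ \frac{n\,A_q(n,2t+1)}{H_q(n,t)} = 0, \] where the supremum is over integers $t$ with $10\sqrt{n} < t \le \theta n - C_q\sqrt{n\log n}$; that is, $A_q(n, 2t+1) = o\!\left( H_q(n,t)/n\right)$ uniformly in this range of $t$.
   Context: $A_q(n,d)$ is the maximum size of a subset of $[q]^n$ whose elements pairwise have Hamming distance (number of differing coordinates) at least $d$. $V_q(n,r) = \sum_{i=0}^{r}\binom{n}{i}(q-1)^i$ and $H_q(n,t) = q^n / V_q(n,t)$. $\log$ is the natural logarithm. *)

theory Defs
  imports "HOL-Analysis.Analysis"
begin

definition words :: "nat \<Rightarrow> nat \<Rightarrow> nat list set" where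
  "words q n = {xs. length xs = n \<and> set xs \<subseteq> {0..<q}}"

definition hamming :: "nat list \<Rightarrow> nat list \<Rightarrow> nat" where
  "hamming xs ys = card {i. i < length xs \<and> xs ! i \<noteq> ys ! i}"

definition A_code :: "nat \<Rightarrow> nat \<Rightarrow> nat \<Rightarrow> nat" where
  "A_code q n d = Max {card C | C. C \<subseteq> words q n \<and>
      (\<forall>x\<in>C. \<forall>y\<in>C. x \<noteq> y \<longrightarrow> hamming x y \<ge> d)}"

definition V_ball :: "nat \<Rightarrow> nat \<Rightarrow> nat \<Rightarrow> real" where
  "V_ball q n r = (\<Sum>i=0..r. real (n choose i) * (real q - 1) ^ i)"

definition H_bound :: "nat \<Rightarrow> nat \<Rightarrow> nat \<Rightarrow> real" where
  "H_bound q n t = real q ^ n / V_ball q n t"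

end

theory Submission
  imports Defs "HOL-Real_Asymp.Real_Asymp"
begin

lemma words_finite: "finite (words q n)"
  unfolding words_def using finite_lists_length_eq[of "{0..<q}" n] by (simp add: conj_commute)

lemma words_card: "card (words q n) = q ^ n"
  unfolding words_def using card_lists_length_eq[of "{0..<q}" n] by (simp add: conj_commute)

lemma words_Suc: "words q (Suc n) = (\<lambda>(a,xs). a # xs) ` ({0..<q} \<times> words q n)"
proof -
  have "x \<in> (\<lambda>(a,xs). a # xs) ` ({0..<q} \<times> words q n)" if "x \<in> words q (Suc n)" for x
  proof -
    from that obtain a xs where x: "x = a # xs" unfolding words_def by (cases x) auto
    show ?thesis using that unfolding x words_def by (auto intro!: image_eqI[of _ _ "(a,xs)"])
  qed
  then show ?thesis unfolding words_def by auto
qed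

lemma Collect_less_Suc: "{i. i < Suc m \<and> P i} = {i. i = 0 \<and> P 0} \<union> Suc ` {i. i < m \<and> P (Suc i)}"
  by (auto simp: less_Suc_eq_0_disj)

lemma hamming_Cons: "length xs = length ys \<Longrightarrow>
  hamming (a # xs) (b # ys) = (if a = b then 0 else 1) + hamming xs ys"
proof -
  assume len: "length xs = length ys"
  have eq: "{i. i < length (a#xs) \<and> (a#xs) ! i \<noteq> (b#ys) ! i} =
     {i. i = 0 \<and> a \<noteq> b} \<union> Suc ` {i. i < length xs \<and> xs ! i \<noteq> ys ! i}"
    using Collect_less_Suc[of "length xs" "\<lambda>i. (a#xs) ! i \<noteq> (b#ys) ! i"] by simp
  have c: "card (Suc ` {i. i < length xs \<and> xs ! i \<noteq> ys ! i}) = hamming xs ys"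
    unfolding hamming_def by (simp add: card_image)
  have d: "{i. i = 0 \<and> a \<noteq> b} \<inter> Suc ` {i. i < length xs \<and> xs ! i \<noteq> ys ! i} = {}" by auto
  have "hamming (a # xs) (b # ys) = card {i::nat. i = 0 \<and> a \<noteq> b} + hamming xs ys"
    unfolding hamming_def[of "a#xs"] eq by (subst card_Un_disjoint) (use d c in auto)
  then show ?thesis by (cases "a = b") auto
qed

lemma hamming_le: "hamming xs ys \<le> length xs"
  unfolding hamming_def by (rule order_trans[OF card_mono[of "{..<length xs}"]]) auto

lemma sphere_card:
  assumes "x \<in> words q n"
  shows "card {y \<in> words q n. hamming x y = w} = (n choose w) * (q - 1) ^ w"
  using assms
proof (induction n arbitrary: x w)
  case 0
  then have "x = []" unfolding words_def by auto
  moreover have "words q 0 = {[]}" unfolding words_def by auto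
  ultimately show ?case by (cases w) (auto simp: hamming_def)
next
  case (Suc n)
  from Suc.prems obtain a xs where x: "x = a # xs" and a: "a < q" and xs: "xs \<in> words q n"
    unfolding words_def by (cases x) auto
  define S where "S = (\<lambda>w. {y \<in> words q n. hamming xs y = w})"
  have fin: "finite (S w)" for w unfolding S_def using words_finite by auto
  have lenw: "y \<in> words q n \<Longrightarrow> length y = n" for y unfolding words_def by auto
  have "{y \<in> words q (Suc n). hamming x y = w} =
        (\<lambda>(b,ys). b # ys) ` ({a} \<times> S w \<union> (if w = 0 then {} else ({0..<q} - {a}) \<times> S (w - 1)))"
    (is "?L = ?R")
  proof
    show "?L \<subseteq> ?R"
    proof
      fix y assume "y \<in> ?L"
      then obtain b ys where y: "y = b # ys" "b < q" "ys \<in> words q n" "hamming x y = w"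
        using words_Suc[of q n] by auto
      have "length xs = length ys" using xs y(3) lenw by auto
      then have h: "w = (if a = b then 0 else 1) + hamming xs ys" using y(4) x y(1) hamming_Cons by simp
      show "y \<in> ?R" using y h by (auto simp: S_def intro!: image_eqI[of _ _ "(b,ys)"])
    qed
  next
    show "?R \<subseteq> ?L"
    proof
      fix y assume "y \<in> ?R"
      then obtain p where p: "p \<in> {a} \<times> S w \<union> (if w = 0 then {} else ({0..<q} - {a}) \<times> S (w - 1))"
         and yp: "y = (\<lambda>(b,ys). b # ys) p" by blast
      obtain b ys where pb: "p = (b, ys)" by (cases p)
      have y: "y = b # ys" "b < q" "ys \<in> words q n"
        "(b = a \<and> hamming xs ys = w) \<or> (w \<noteq> 0 \<and> b \<noteq> a \<and> hamming xs ys = w - 1)"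
        using p yp a unfolding pb by (auto simp: S_def split: if_splits)
      have "length xs = length ys" using xs y(3) lenw by auto
      then have "hamming x y = w" using y(4) x y(1) hamming_Cons[of xs ys a b] by auto
      then show "y \<in> ?L" using y words_Suc[of q n] by auto
    qed
  qed
  moreover have "inj_on (\<lambda>(b,ys). b # ys) X" for X :: "(nat \<times> nat list) set" by (auto simp: inj_on_def)
  ultimately have "card {y \<in> words q (Suc n). hamming x y = w} =
      card ({a} \<times> S w \<union> (if w = 0 then {} else ({0..<q} - {a}) \<times> S (w - 1)))"
    by (simp add: card_image)
  also have "\<dots> = card (S w) + (if w = 0 then 0 else (q - 1) * card (S (w - 1)))"
    using fin a by (subst card_Un_disjoint) (auto simp: card_cartesian_product)
  also have "\<dots> = (Suc n choose w) * (q - 1) ^ w"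
  proof (cases w)
    case 0 then show ?thesis using Suc.IH[OF xs] by (simp add: S_def)
  next
    case (Suc v)
    have "card (S w) + (q - 1) * card (S v) = (n choose Suc v) * (q-1)^Suc v + (q - 1) * ((n choose v) * (q-1)^v)"
      using Suc.IH[OF xs] by (simp add: S_def Suc)
    also have "\<dots> = (Suc n choose Suc v) * (q-1)^Suc v"
    proof -
      obtain r where r: "r = q - 1" by simp
      show ?thesis unfolding r[symmetric] by (simp add: algebra_simps)
    qed
    finally show ?thesis using Suc by simp
  qed
  finally show ?case .
qed

lemma sum_sq_card:
  fixes f :: "'a \<Rightarrow> real"
  assumes "finite A" "A \<noteq> {}"
  shows "(\<Sum>a\<in>A. f a)^2 / card A \<le> (\<Sum>a\<in>A. (f a)^2)"
proof -
  have "(\<Sum>a\<in>A. f a * 1)^2 \<le> (\<Sum>a\<in>A. (f a)^2) * (\<Sum>a\<in>A. 1^2)"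
    by (rule Cauchy_Schwarz_ineq_sum)
  then have "(\<Sum>a\<in>A. f a)^2 \<le> (\<Sum>a\<in>A. (f a)^2) * card A" by simp
  moreover have "card A > 0" using assms by (simp add: card_gt_0_iff)
  ultimately show ?thesis by (simp add: divide_le_eq)
qed

lemma column_bound:
  fixes B :: "nat list set"
  assumes q: "q \<ge> 2" and fin: "finite B" and Bq: "\<forall>x\<in>B. x ! i < q" and zq: "zi < q"
  shows "(\<Sum>x\<in>B. \<Sum>y\<in>B. (if x ! i \<noteq> y ! i then 1 else 0 :: real))
     \<le> 2 * real (card B) * real (card {x\<in>B. x ! i \<noteq> zi}) - (real (card {x\<in>B. x ! i \<noteq> zi}))^2 * real q / (real q - 1)"
proof -
  define m where "m = (\<lambda>a. real (card {x\<in>B. x ! i = a}))"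
  define M where "M = real (card B)"
  define s where "s = real (card {x\<in>B. x ! i \<noteq> zi})"
  have inner: "(\<Sum>y\<in>B. (if x ! i = y ! i then 1 else 0 :: real)) = m (x ! i)" for x
    unfolding m_def using fin by (auto simp: sum.If_cases eq_commute intro!: arg_cong[where f=card])
  have ind: "(\<Sum>a\<in>{0..<q}. (if x ! i = a then m a else 0)) = m (x ! i)" if "x \<in> B" for x
    using Bq that by (simp add: sum.delta)
  have eqs: "(\<Sum>x\<in>B. \<Sum>y\<in>B. (if x ! i = y ! i then 1 else 0 :: real)) = (\<Sum>a\<in>{0..<q}. (m a)^2)"
  proof -
    have "(\<Sum>x\<in>B. \<Sum>y\<in>B. (if x ! i = y ! i then 1 else 0 :: real)) = (\<Sum>x\<in>B. m (x ! i))"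
      using inner by simp
    also have "\<dots> = (\<Sum>x\<in>B. \<Sum>a\<in>{0..<q}. (if x ! i = a then m a else 0))"
      using ind by simp
    also have "\<dots> = (\<Sum>a\<in>{0..<q}. \<Sum>x\<in>B. (if x ! i = a then m a else 0))"
      by (rule sum.swap)
    also have "\<dots> = (\<Sum>a\<in>{0..<q}. (m a)^2)"
      using fin by (simp add: sum.If_cases m_def power2_eq_square Int_def)
    finally show ?thesis .
  qed
  have tot: "(\<Sum>x\<in>B. \<Sum>y\<in>B. (if x ! i \<noteq> y ! i then 1 else 0 :: real)) = M^2 - (\<Sum>a\<in>{0..<q}. (m a)^2)"
  proof -
    have "(\<Sum>x\<in>B. \<Sum>y\<in>B. (if x ! i \<noteq> y ! i then 1 else 0 :: real)) =
       (\<Sum>x\<in>B. \<Sum>y\<in>B. (1 - (if x ! i = y ! i then 1 else 0 :: real)))"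
      by (intro sum.cong) auto
    also have "\<dots> = M^2 - (\<Sum>x\<in>B. \<Sum>y\<in>B. (if x ! i = y ! i then 1 else 0 :: real))"
      by (simp add: sum_subtractf M_def power2_eq_square)
    finally show ?thesis using eqs by simp
  qed
  have msum: "(\<Sum>a\<in>{0..<q}. m a) = M"
  proof -
    have "(\<Sum>a\<in>{0..<q}. m a) = (\<Sum>a\<in>{0..<q}. \<Sum>x\<in>B. (if x ! i = a then 1 else 0 :: real))"
      using fin by (simp add: m_def sum.If_cases Int_def)
    also have "\<dots> = (\<Sum>x\<in>B. \<Sum>a\<in>{0..<q}. (if x ! i = a then 1 else 0 :: real))"
      by (rule sum.swap)
    also have "\<dots> = M" using Bq by (simp add: sum.delta M_def)
    finally show ?thesis .
  qed
  have mz: "m zi = M - s"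
  proof -
    have "B = {x\<in>B. x ! i = zi} \<union> {x\<in>B. x ! i \<noteq> zi}" by auto
    then have "card B = card {x\<in>B. x ! i = zi} + card {x\<in>B. x ! i \<noteq> zi}"
      using fin by (metis (no_types, lifting) card_Un_disjoint disjoint_iff finite_Un mem_Collect_eq)
    then show ?thesis unfolding m_def M_def s_def by simp
  qed
  have split1: "(\<Sum>a\<in>{0..<q}. m a) = m zi + (\<Sum>a\<in>{0..<q} - {zi}. m a)"
    using zq by (simp add: sum.remove)
  have split2: "(\<Sum>a\<in>{0..<q}. (m a)^2) = (m zi)^2 + (\<Sum>a\<in>{0..<q} - {zi}. (m a)^2)"
    using zq by (simp add: sum.remove)
  have ssum: "(\<Sum>a\<in>{0..<q} - {zi}. m a) = s" using split1 msum mz by simp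
  have cardA: "card ({0..<q} - {zi}) = q - 1" using zq by simp
  have ne: "{0..<q} - {zi} \<noteq> {}"
  proof -
    have "card ({0..<q} - {zi}) > 0" using cardA q by simp
    then show ?thesis by (metis card.empty less_irrefl)
  qed
  have cs: "s^2 / (real q - 1) \<le> (\<Sum>a\<in>{0..<q} - {zi}. (m a)^2)"
    using sum_sq_card[OF _ ne, of m] ssum cardA q by (simp add: of_nat_diff)
  have qq: "real q / (real q - 1) = 1 + 1 / (real q - 1)" using q by (simp add: field_simps)
  have "(\<Sum>x\<in>B. \<Sum>y\<in>B. (if x ! i \<noteq> y ! i then 1 else 0 :: real)) \<le> M^2 - (M - s)^2 - s^2 / (real q - 1)"
    using tot split2 mz cs by simp
  also have "\<dots> = 2 * M * s - s^2 * q / (real q - 1)"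
  proof -
    have qne: "real q - 1 \<noteq> 0" using q by simp
    show ?thesis using qne by (simp add: field_simps power2_eq_square)
  qed
  finally show ?thesis unfolding M_def s_def .
qed

lemma hamming_sum:
  assumes "length x = n"
  shows "real (hamming x y) = (\<Sum>i<n. if x ! i \<noteq> y ! i then 1 else 0)"
proof -
  have "{i. i < length x \<and> x ! i \<noteq> y ! i} = {i\<in>{..<n}. x ! i \<noteq> y ! i}" using assms by auto
  then have "hamming x y = card {i\<in>{..<n}. x ! i \<noteq> y ! i}" unfolding hamming_def by simp
  also have "real \<dots> = (\<Sum>i\<in>{i\<in>{..<n}. x ! i \<noteq> y ! i}. 1)" by simp
  also have "\<dots> = (\<Sum>i<n. if x ! i \<noteq> y ! i then 1 else 0)"
    by (subst sum.inter_filter) auto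
  finally show ?thesis .
qed

lemma swap3: "(\<Sum>x\<in>A. \<Sum>y\<in>B. \<Sum>i\<in>I. f x y i) = (\<Sum>i\<in>I. \<Sum>x\<in>A. \<Sum>y\<in>B. f x y i)"
proof -
  have "(\<Sum>x\<in>A. \<Sum>y\<in>B. \<Sum>i\<in>I. f x y i) = (\<Sum>x\<in>A. \<Sum>i\<in>I. \<Sum>y\<in>B. f x y i)"
    by (rule sum.cong[OF refl]) (rule sum.swap)
  also have "\<dots> = (\<Sum>i\<in>I. \<Sum>x\<in>A. \<Sum>y\<in>B. f x y i)" by (rule sum.swap)
  finally show ?thesis .
qed

lemma pair_bound:
  fixes B :: "nat list set"
  assumes q: "q \<ge> 2" and BW: "B \<subseteq> words q n" and z: "z \<in> words q n"
    and dist: "\<forall>x\<in>B. \<forall>y\<in>B. x \<noteq> y \<longrightarrow> d \<le> hamming x y"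
  shows "real (card B) * (real (card B) - 1) * d \<le>
     (\<Sum>i<n. 2 * real (card B) * real (card {x\<in>B. x ! i \<noteq> z ! i}) - (real (card {x\<in>B. x ! i \<noteq> z ! i}))^2 * real q / (real q - 1))"
    and "(\<Sum>i<n. real (card {x\<in>B. x ! i \<noteq> z ! i})) = (\<Sum>x\<in>B. real (hamming x z))"
proof -
  have fin: "finite B" using BW words_finite finite_subset by blast
  have len: "x \<in> B \<Longrightarrow> length x = n" for x using BW unfolding words_def by auto
  have wn: "y \<in> words q n \<Longrightarrow> i < n \<Longrightarrow> y ! i < q" for y i
  proof -
    assume a: "y \<in> words q n" "i < n"
    then have s: "set y \<subseteq> {0..<q}" and l: "length y = n" by (auto simp: words_def)
    have "y ! i \<in> set y" using a(2) l by simp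
    then show "y ! i < q" using s by auto
  qed
  have ent: "x \<in> B \<Longrightarrow> i < n \<Longrightarrow> x ! i < q" for x i using wn[of x i] BW by blast
  have zent: "i < n \<Longrightarrow> z ! i < q" for i using wn[of z i] z by blast
  define M where "M = real (card B)"
  have low: "M * (M - 1) * d \<le> (\<Sum>x\<in>B. \<Sum>y\<in>B. real (hamming x y))"
  proof -
    have "(M - 1) * d \<le> (\<Sum>y\<in>B. real (hamming x y))" if x: "x \<in> B" for x
    proof -
      have c0: "card B \<noteq> 0" using fin x by auto
      have c1: "card B \<ge> 1" using c0 by simp
      have cd: "card (B - {x}) = card B - 1" using x fin by (simp add: card_Diff_singleton)
      have cr: "real (card (B - {x})) = M - 1" unfolding cd M_def using c1 by (simp add: of_nat_diff)
      have "(M - 1) * d = (\<Sum>y\<in>B - {x}. real d)" unfolding sum_constant cr by simp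
      also have "\<dots> \<le> (\<Sum>y\<in>B - {x}. real (hamming x y))"
        using dist x by (intro sum_mono) auto
      also have "\<dots> \<le> (\<Sum>y\<in>B. real (hamming x y))"
        using fin x by (intro sum_mono2) auto
      finally show ?thesis .
    qed
    then have "(\<Sum>x\<in>B. (M - 1) * d) \<le> (\<Sum>x\<in>B. \<Sum>y\<in>B. real (hamming x y))" by (rule sum_mono)
    then show ?thesis by (simp add: M_def)
  qed
  have "(\<Sum>x\<in>B. \<Sum>y\<in>B. real (hamming x y)) =
        (\<Sum>x\<in>B. \<Sum>y\<in>B. \<Sum>i<n. if x ! i \<noteq> y ! i then 1 else 0)"
    using len by (auto intro!: sum.cong hamming_sum)
  also have "\<dots> = (\<Sum>i<n. \<Sum>x\<in>B. \<Sum>y\<in>B. if x ! i \<noteq> y ! i then 1 else 0)"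
    by (rule swap3[of "\<lambda>x y i. if x ! i \<noteq> y ! i then 1 else (0::real)"])
  also have "\<dots> \<le> (\<Sum>i<n. 2 * real (card B) * real (card {x\<in>B. x ! i \<noteq> z ! i}) - (real (card {x\<in>B. x ! i \<noteq> z ! i}))^2 * real q / (real q - 1))"
    by (intro sum_mono column_bound[OF q fin]) (auto simp: ent zent)
  finally have up: "(\<Sum>x\<in>B. \<Sum>y\<in>B. real (hamming x y)) \<le> (\<Sum>i<n. 2 * real (card B) * real (card {x\<in>B. x ! i \<noteq> z ! i}) - (real (card {x\<in>B. x ! i \<noteq> z ! i}))^2 * real q / (real q - 1))" .
  show "real (card B) * (real (card B) - 1) * d \<le>
     (\<Sum>i<n. 2 * real (card B) * real (card {x\<in>B. x ! i \<noteq> z ! i}) - (real (card {x\<in>B. x ! i \<noteq> z ! i}))^2 * real q / (real q - 1))"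
    by (rule order_trans[OF low[unfolded M_def] up])
  have "(\<Sum>i<n. real (card {x\<in>B. x ! i \<noteq> z ! i})) = (\<Sum>i<n. \<Sum>x\<in>B. if x ! i \<noteq> z ! i then 1 else 0)"
    using fin by (simp add: sum.If_cases Int_def)
  also have "\<dots> = (\<Sum>x\<in>B. \<Sum>i<n. if x ! i \<noteq> z ! i then 1 else 0)"
    by (rule sum.swap[of "\<lambda>i x. if x ! i \<noteq> z ! i then 1 else (0::real)" B "{..<n}"])
  also have "\<dots> = (\<Sum>x\<in>B. real (hamming x z))" by (rule sum.cong[OF refl]) (rule hamming_sum[OF len, symmetric])
  finally show "(\<Sum>i<n. real (card {x\<in>B. x ! i \<noteq> z ! i})) = (\<Sum>x\<in>B. real (hamming x z))" .
qed

lemma card_filter_sum: "finite A \<Longrightarrow> card {x\<in>A. P x} = (\<Sum>x\<in>A. if P x then 1 else 0)"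
  by (simp add: sum.If_cases Int_def)

lemma averaging:
  assumes q: "q \<ge> 1" and CW: "C \<subseteq> words q n"
  shows "\<exists>z\<in>words q n. card C * ((n choose w) * (q - 1) ^ w) \<le> card {c\<in>C. hamming c z = w} * q ^ n"
proof (rule ccontr)
  assume "\<not> ?thesis"
  then have lt: "\<And>z. z \<in> words q n \<Longrightarrow> card {c\<in>C. hamming c z = w} * q ^ n < card C * ((n choose w) * (q - 1) ^ w)"
    by (meson not_le)
  have finC: "finite C" using CW words_finite finite_subset by blast
  have Wne: "replicate n 0 \<in> words q n" using q unfolding words_def by auto
  have "(\<Sum>z\<in>words q n. card {c\<in>C. hamming c z = w}) = (\<Sum>z\<in>words q n. \<Sum>c\<in>C. if hamming c z = w then 1 else 0)"
    using finC by (simp add: card_filter_sum)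
  also have "\<dots> = (\<Sum>c\<in>C. \<Sum>z\<in>words q n. if hamming c z = w then 1 else 0)" by (rule sum.swap)
  also have "\<dots> = (\<Sum>c\<in>C. card {z\<in>words q n. hamming c z = w})"
    using words_finite by (simp add: card_filter_sum)
  also have "\<dots> = (\<Sum>c\<in>C. (n choose w) * (q - 1) ^ w)"
    using CW sphere_card by (intro sum.cong) auto
  finally have eq: "(\<Sum>z\<in>words q n. card {c\<in>C. hamming c z = w}) = card C * ((n choose w) * (q - 1) ^ w)"
    by simp
  have "(\<Sum>z\<in>words q n. card {c\<in>C. hamming c z = w} * q ^ n) < (\<Sum>z\<in>words q n. card C * ((n choose w) * (q - 1) ^ w))"
    using lt Wne words_finite by (intro sum_strict_mono) auto
  then have "card C * ((n choose w) * (q - 1) ^ w) * q ^ n < q ^ n * (card C * ((n choose w) * (q - 1) ^ w))"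
    by (simp add: sum_distrib_right[symmetric] eq words_card)
  then show False by (simp add: mult.commute)
qed

lemma johnson_sphere:
  fixes B :: "nat list set"
  assumes q: "q \<ge> 2" and n: "n > 0" and BW: "B \<subseteq> words q n" and z: "z \<in> words q n"
    and dist: "\<forall>x\<in>B. \<forall>y\<in>B. x \<noteq> y \<longrightarrow> d \<le> hamming x y"
    and sph: "\<forall>x\<in>B. hamming x z = w"
  shows "real (card B) * (d - 2 * w + real w ^ 2 / n) \<le> d"
proof -
  define M where "M = real (card B)"
  define s where "s = (\<lambda>i. real (card {x\<in>B. x ! i \<noteq> z ! i}))"
  have pb1: "M * (M - 1) * d \<le> (\<Sum>i<n. 2 * M * s i - (s i)^2 * q / (real q - 1))"
    using pair_bound(1)[OF q BW z dist] unfolding M_def s_def using q by (simp add: of_nat_diff)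
  have pb2: "(\<Sum>i<n. s i) = M * w"
    using pair_bound(2)[OF q BW z dist] sph unfolding M_def s_def by simp
  have "(\<Sum>i<n. 2 * M * s i - (s i)^2 * q / (real q - 1)) \<le> (\<Sum>i<n. 2 * M * s i - (s i)^2)"
  proof (intro sum_mono)
    fix i
    have "1 \<le> real q / (real q - 1)" using q by (simp add: le_divide_eq)
    then have "(s i)^2 * 1 \<le> (s i)^2 * (real q / (real q - 1))" by (intro mult_left_mono) auto
    then show "2 * M * s i - (s i)^2 * q / (real q - 1) \<le> 2 * M * s i - (s i)^2" using q
      by (simp add: of_nat_diff)
  qed
  also have "\<dots> = 2 * M * (M * w) - (\<Sum>i<n. (s i)^2)"
    by (simp add: sum_subtractf sum_distrib_left[symmetric] pb2)
  also have "\<dots> \<le> 2 * M * (M * w) - (M * w)^2 / n"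
    using sum_sq_card[of "{..<n}" s] n pb2 by (simp add: lessThan_empty_iff)
  finally have key: "M * (M - 1) * d \<le> 2 * M * (M * w) - (M * w)^2 / n" using pb1 by linarith
  show ?thesis
  proof (cases "M = 0")
    case True then show ?thesis by (simp add: M_def)
  next
    case False
    then have Mpos: "M > 0" unfolding M_def by simp
    have "M * ((M - 1) * d) \<le> M * (2 * M * w - M * w^2 / n)"
      using key by (simp add: algebra_simps power2_eq_square)
    then have "(M - 1) * d \<le> 2 * M * w - M * w^2 / n" using Mpos by simp
    then show ?thesis unfolding M_def[symmetric] by (simp add: algebra_simps)
  qed
qed

lemma plotkin:
  fixes B :: "nat list set"
  assumes q: "q \<ge> 2" and BW: "B \<subseteq> words q n"
    and dist: "\<forall>x\<in>B. \<forall>y\<in>B. x \<noteq> y \<longrightarrow> d \<le> hamming x y"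
  shows "real (card B) * (d - (1 - 1 / q) * n) \<le> d"
proof -
  define z where "z = replicate n (0::nat)"
  have z: "z \<in> words q n" using q unfolding z_def words_def by auto
  define M where "M = real (card B)"
  define s where "s = (\<lambda>i. real (card {x\<in>B. x ! i \<noteq> z ! i}))"
  define th where "th = 1 - 1 / real q"
  have pb1: "M * (M - 1) * d \<le> (\<Sum>i<n. 2 * M * s i - (s i)^2 * q / (real q - 1))"
    using pair_bound(1)[OF q BW z dist] unfolding M_def s_def using q by (simp add: of_nat_diff)
  also have "\<dots> \<le> (\<Sum>i<n. th * M^2)"
  proof (intro sum_mono)
    fix i
    have "real q / (real q - 1) * (s i - th * M)^2 \<ge> 0" using q by simp
    moreover have "real q / (real q - 1) * (s i - th * M)^2 = (s i)^2 * q / (real q - 1) - 2 * M * s i + th * M^2"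
      using q by (simp add: th_def field_simps power2_eq_square)
    ultimately show "2 * M * s i - (s i)^2 * q / (real q - 1) \<le> th * M^2" by linarith
  qed
  finally have key: "M * (M - 1) * d \<le> n * (th * M^2)" by simp
  show ?thesis
  proof (cases "M = 0")
    case True then show ?thesis by (simp add: M_def)
  next
    case False
    then have Mpos: "M > 0" unfolding M_def by simp
    have "M * ((M - 1) * d) \<le> M * (n * th * M)"
      using key by (simp add: algebra_simps power2_eq_square)
    then have "(M - 1) * d \<le> n * th * M" using Mpos by simp
    then show ?thesis unfolding M_def[symmetric] th_def[symmetric] by (simp add: algebra_simps)
  qed
qed

lemma V_chernoff:
  assumes q: "q \<ge> 2" and x: "0 < x" "x \<le> 1" and tn: "t \<le> n"
  shows "V_ball q n t \<le> (1 + (real q - 1) * x) ^ n / x ^ t"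
proof -
  have "V_ball q n t = (\<Sum>i=0..t. real (n choose i) * (real q - 1) ^ i)" unfolding V_ball_def ..
  also have "\<dots> \<le> (\<Sum>i=0..t. real (n choose i) * ((real q - 1) * x) ^ i / x ^ t)"
  proof (intro sum_mono)
    fix i assume i: "i \<in> {0..t}"
    have "x ^ t \<le> x ^ i" using i x by (intro power_decreasing) auto
    then have "1 \<le> x ^ i / x ^ t" using x by simp
    moreover have "0 \<le> real (n choose i) * (real q - 1) ^ i" using q by simp
    ultimately have "real (n choose i) * (real q - 1) ^ i \<le> real (n choose i) * (real q - 1) ^ i * (x ^ i / x ^ t)"
      by (metis mult_le_cancel_left1 linorder_not_less order.strict_iff_not)
    then show "real (n choose i) * (real q - 1) ^ i \<le> real (n choose i) * ((real q - 1) * x) ^ i / x ^ t"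
      by (simp add: power_mult_distrib mult_ac)
  qed
  also have "\<dots> \<le> (\<Sum>i=0..n. real (n choose i) * ((real q - 1) * x) ^ i / x ^ t)"
    using tn q x by (intro sum_mono2) auto
  also have "\<dots> = (\<Sum>i\<le>n. real (n choose i) * ((real q - 1) * x) ^ i * 1 ^ (n - i)) / x ^ t"
    by (simp add: sum_divide_distrib atLeast0AtMost)
  also have "\<dots> = ((real q - 1) * x + 1) ^ n / x ^ t"
    by (subst binomial_ring) simp
  finally show ?thesis by (simp add: add.commute)
qed

lemma V_tail:
  assumes q: "q \<ge> 2" and n: "n > 0" and d: "0 < dl" "dl \<le> n"
    and tle: "real t + dl \<le> (1 - 1 / real q) * n" 
  shows "V_ball q n t / real q ^ n \<le> exp (- (dl^2) / (8 * real n))"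
proof -
  define th where "th = 1 - 1 / real q"
  have th: "0 < th" "th \<le> 1" using q by (auto simp: th_def)
  define e where "e = dl / (4 * n)"
  have e: "0 < e" "e \<le> 1/4" using d n by (auto simp: e_def field_simps)
  have tn: "t \<le> n" using tle d th unfolding th_def[symmetric]
    by (smt (verit) mult_left_le_one_le of_nat_0_le_iff of_nat_le_iff)
  have "V_ball q n t \<le> (1 + (real q - 1) * (1 - e)) ^ n / (1 - e) ^ t"
    using V_chernoff[OF q _ _ tn, of "1 - e"] e by simp
  also have "1 + (real q - 1) * (1 - e) = real q * (1 - th * e)"
    using q by (simp add: th_def field_simps)
  finally have V0: "V_ball q n t \<le> ((1 - th * e) ^ n / (1 - e) ^ t) * real q ^ n"
    by (simp add: power_mult_distrib mult.commute)
  have V: "V_ball q n t / real q ^ n \<le> (1 - th * e) ^ n / (1 - e) ^ t"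
    using V0 q by (subst pos_divide_le_eq) auto
  have a: "(1 - th * e) ^ n \<le> exp (- th * e) ^ n"
  proof (rule power_mono)
    show "1 - th * e \<le> exp (- th * e)" using exp_ge_add_one_self[of "- th * e"] by simp
    have "th * e \<le> 1 * (1/4)" using th e by (intro mult_mono) auto
    then show "0 \<le> 1 - th * e" by simp
  qed
  have b: "exp (- e - 2 * e^2) ^ t \<le> (1 - e) ^ t"
  proof (rule power_mono)
    have "- e - 2 * e^2 \<le> ln (1 - e)" using e by (intro ln_one_minus_pos_lower_bound) auto
    then show "exp (- e - 2 * e^2) \<le> 1 - e" using e by (metis exp_le_cancel_iff exp_ln diff_gt_0_iff_gt less_le_trans order_le_less_trans one_less_numeral_iff semiring_norm(76) divide_less_eq_1_pos zero_less_numeral) 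
  qed simp
  have "(1 - th * e) ^ n / (1 - e) ^ t \<le> exp (- th * e) ^ n / exp (- e - 2 * e^2) ^ t"
    using a b e by (intro frac_le) auto
  also have "\<dots> = exp (- th * e * n + t * (e + 2 * e^2))"
    by (simp add: exp_of_nat_mult[symmetric] exp_diff[symmetric] algebra_simps)
  also have "\<dots> \<le> exp (- (dl^2) / (8 * real n))"
  proof -
    have "t * (e + 2 * e^2) \<le> (th * n - dl) * e + n * (2 * e^2)"
    proof -
      have 1: "t * e \<le> (th * n - dl) * e" using tle e unfolding th_def[symmetric]
        by (intro mult_right_mono) auto
      have 2: "t * (2 * e^2) \<le> n * (2 * e^2)" using tn by (intro mult_right_mono) auto
      show ?thesis using 1 2 by (simp add: distrib_left)
    qed
    then have "- th * e * n + t * (e + 2 * e^2) \<le> - dl * e + 2 * n * e^2" by (simp add: algebra_simps)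
    also have "\<dots> = - (dl^2) / (8 * real n)" using n by (simp add: e_def field_simps power2_eq_square)
    finally show ?thesis by simp
  qed
  finally show ?thesis using V by linarith
qed

lemma lim1: "((\<lambda>n::nat. real n * (2 * real n + 1) * (real n + 1) / real n ^ 8) \<longlongrightarrow> 0) at_top"
  by real_asymp
lemma lim2: "((\<lambda>n::nat. real n * (2 * real n + 1) * (real n + 1) * 3^25 / real n ^ 10) \<longlongrightarrow> 0) at_top"
  by real_asymp
lemma lim3: "((\<lambda>n::nat. real n * (2 * real n + 1) * (real n + 1) * 2 powr (1 - root 5 (real n) / 4)) \<longlongrightarrow> 0) at_top"
  by real_asymp
lemma ev1: "eventually (\<lambda>n::nat. 10 * sqrt (real n) + 8 * sqrt (real n * ln (real n)) + 1 < real n / 2) at_top"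
  by real_asymp

lemma A_obtain:
  "\<exists>C. C \<subseteq> words q n \<and> (\<forall>x\<in>C. \<forall>y\<in>C. x \<noteq> y \<longrightarrow> d \<le> hamming x y) \<and> A_code q n d = card C"
proof -
  define P where "P = (\<lambda>C. C \<subseteq> words q n \<and> (\<forall>x\<in>C. \<forall>y\<in>C. x \<noteq> y \<longrightarrow> d \<le> hamming x y))"
  have X: "{card C | C. C \<subseteq> words q n \<and> (\<forall>x\<in>C. \<forall>y\<in>C. x \<noteq> y \<longrightarrow> d \<le> hamming x y)} = card ` {C. P C}"
    unfolding P_def by auto
  have "{C. P C} \<subseteq> Pow (words q n)" unfolding P_def by auto
  then have fin: "finite {C. P C}" using words_finite finite_subset by blast
  have ne: "{C. P C} \<noteq> {}" unfolding P_def by (auto intro!: exI[of _ "{}"])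
  have "Max (card ` {C. P C}) \<in> card ` {C. P C}" using fin ne by (intro Max_in) auto
  then obtain C where "P C" "A_code q n d = card C" unfolding A_code_def X by auto
  then show ?thesis unfolding P_def by auto
qed

lemma V_pos: "q \<ge> 2 \<Longrightarrow> V_ball q n t > 0"
proof -
  assume q: "q \<ge> 2"
  have "V_ball q n t = 1 + (\<Sum>i\<in>{0..t} - {0}. real (n choose i) * (real q - 1) ^ i)"
    unfolding V_ball_def by (subst sum.remove[of _ 0]) auto
  moreover have "(\<Sum>i\<in>{0..t} - {0}. real (n choose i) * (real q - 1) ^ i) \<ge> 0"
    using q by (intro sum_nonneg) auto
  ultimately show ?thesis by linarith
qed

definition Sw :: "nat \<Rightarrow> nat \<Rightarrow> nat \<Rightarrow> real" where
  "Sw q n j = real (n choose j) * (real q - 1) ^ j"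

lemma choose_step: "j < n \<Longrightarrow> real (n choose Suc j) * (real j + 1) = real (n choose j) * (real n - real j)"
proof -
  assume j: "j < n"
  have a: "Suc j * (n choose Suc j) = n * ((n - 1) choose j)"
    using times_binomial_minus1_eq[of "Suc j" n] by simp
  have b: "(n - j) * (n choose j) = n * ((n - 1) choose j)" by (rule binomial_absorb_comp)
  have "Suc j * (n choose Suc j) = (n - j) * (n choose j)" using a b by simp
  then have "real (Suc j * (n choose Suc j)) = real ((n - j) * (n choose j))" by simp
  then show ?thesis using j by (simp add: of_nat_diff algebra_simps)
qed

lemma S_ratio:
  assumes q: "q \<ge> 2" and j: "j + 1 \<le> w" and w: "w < n"
  shows "Sw q n j \<le> (real w / ((real n - w) * (real q - 1))) * Sw q n (Suc j)"
proof -
  define a where "a = real (n choose j)"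
  define b where "b = real (n choose Suc j)"
  define r where "r = real q - 1"
  have r: "r \<ge> 1" using q by (simp add: r_def)
  have nw: "real n - w > 0" using w by simp
  have id: "b * (real j + 1) = a * (real n - real j)" unfolding a_def b_def using choose_step j w by simp
  have a0: "a \<ge> 0" unfolding a_def by simp
  have m0: "(real j + 1) * (real n - w) \<le> real w * (real n - real j)"
    using j w by (intro mult_mono) auto
  have m: "(real n - w) * (real j + 1) \<le> real w * (real n - real j)"
    using m0 by (simp add: mult.commute)
  have "a * ((real n - w) * (real j + 1)) \<le> a * (real w * (real n - real j))"
    using m a0 by (rule mult_left_mono)
  also have "\<dots> = real w * b * (real j + 1)" by (metis id mult.assoc mult.left_commute)
  finally have "a * (real n - w) \<le> real w * b" by (simp add: mult.assoc[symmetric])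
  then have "a \<le> real w * b / (real n - w)" using nw by (simp add: le_divide_eq)
  then have "a * r ^ j \<le> real w * b / (real n - w) * r ^ j" using r by (intro mult_right_mono) auto
  also have "\<dots> = (real w / ((real n - w) * r)) * (b * r ^ Suc j)"
  proof -
    have r0: "r \<noteq> 0" using r by simp
    have n0: "real n - real w \<noteq> 0" using nw by simp
    show ?thesis using r0 n0 by (simp add: field_simps)
  qed
  finally show ?thesis unfolding Sw_def a_def b_def r_def .
qed

lemma S_pow:
  assumes q: "q \<ge> 2" and w: "w < n" and f: "f = real w / ((real n - w) * (real q - 1))"
  shows "m \<le> w \<Longrightarrow> Sw q n (w - m) \<le> f ^ m * Sw q n w"
proof (induction m)
  case 0 then show ?case by simp
next
  case (Suc m)
  have f0: "f \<ge> 0" unfolding f using w q by simp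
  have "Sw q n (w - Suc m) \<le> f * Sw q n (Suc (w - Suc m))"
    unfolding f using S_ratio[OF q _ w, of "w - Suc m"] Suc.prems by simp
  also have "Suc (w - Suc m) = w - m" using Suc.prems by simp
  also have "f * Sw q n (w - m) \<le> f * (f ^ m * Sw q n w)"
    using Suc f0 by (intro mult_left_mono) auto
  finally show ?case by simp
qed

lemma V_le:
  assumes q: "q \<ge> 2" and w: "w = t + k" "w < n" and f: "f = real w / ((real n - w) * (real q - 1))"
    and f1: "f \<le> 1"
  shows "V_ball q n t \<le> (real t + 1) * f ^ k * Sw q n w"
proof -
  have f0: "f \<ge> 0" unfolding f using w q by simp
  have Sw0: "Sw q n w \<ge> 0" using q by (simp add: Sw_def)
  have "V_ball q n t = (\<Sum>i=0..t. Sw q n i)" unfolding V_ball_def Sw_def ..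
  also have "\<dots> \<le> (\<Sum>i=0..t. f ^ k * Sw q n w)"
  proof (intro sum_mono)
    fix i assume i: "i \<in> {0..t}"
    have "Sw q n i = Sw q n (w - (w - i))" using i w by simp
    also have "\<dots> \<le> f ^ (w - i) * Sw q n w" using S_pow[OF q w(2) f, of "w - i"] by simp
    also have "\<dots> \<le> f ^ k * Sw q n w"
      using i w f0 f1 Sw0 by (intro mult_right_mono power_decreasing) auto
    finally show "Sw q n i \<le> f ^ k * Sw q n w" .
  qed
  also have "\<dots> = (real t + 1) * f ^ k * Sw q n w" by simp
  finally show ?thesis .
qed

definition Pn :: "nat \<Rightarrow> real" where "Pn n = real n * (2 * real n + 1) * (real n + 1)"

definition gb :: "nat \<Rightarrow> nat \<Rightarrow> real" where
  "gb q n = real q * (Pn n / real n ^ 8) + Pn n * 3^25 / real n ^ 10 + Pn n * 2 powr (1 - root 5 (real n) / 4)"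

lemma exp_ln8: "n > 0 \<Longrightarrow> exp (- (8 * ln (real n))) = 1 / real n ^ 8"
proof -
  assume n: "n > 0"
  have "exp (8 * ln (real n)) = exp (ln (real n)) ^ 8"
    by (metis exp_of_nat_mult of_nat_numeral)
  also have "\<dots> = real n ^ 8" using n by simp
  finally show ?thesis by (simp add: exp_minus field_simps)
qed

lemma plotkin_case:
  assumes q: "q \<ge> 2" and n: "n \<ge> 2" and C0: "C0 \<subseteq> words q n"
    and dist: "\<forall>x\<in>C0. \<forall>y\<in>C0. x \<noteq> y \<longrightarrow> 2 * t + 1 \<le> hamming x y"
    and tup: "real t \<le> (1 - 1 / real q) * real n - 8 * sqrt (real n * ln (real n))"
    and big: "real (2 * t + 1) > (1 - 1 / real q) * real n"
  shows "real n * real (card C0) * V_ball q n t / real q ^ n \<le> real q * (Pn n / real n ^ 8)"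
proof -
  define th where "th = 1 - 1 / real q"
  define d where "d = 2 * t + 1"
  have th: "0 < th" "th \<le> 1" using q by (auto simp: th_def)
  have thq: "th * real q = real q - 1" using q by (simp add: th_def field_simps)
  have pl: "real (card C0) * (real d - th * n) \<le> d"
    using plotkin[OF q C0, of d] dist unfolding d_def th_def by simp
  have q0: "real q \<noteq> 0" using q by simp
  have e1: "real q * (th * real n) = (real q - 1) * real n" using q0 by (simp add: th_def field_simps)
  have "real q * (th * real n) < real q * real d"
    using big q unfolding d_def[symmetric] th_def[symmetric] by (intro mult_strict_left_mono) auto
  then have "real q * real d > (real q - 1) * real n" using e1 by simp
  then have "real (q * d) > real ((q - 1) * n)" using q by (simp add: of_nat_diff)
  then have "q * d > (q - 1) * n" by linarith
  then have "q * d \<ge> (q - 1) * n + 1" by linarith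
  then have "real (q * d) \<ge> real ((q - 1) * n) + 1" by linarith
  then have g1: "real q * real d - (real q - 1) * real n \<ge> 1"
    using q by (simp add: of_nat_diff algebra_simps)
  have "real q * (real d - th * n) = real q * real d - (real q - 1) * real n"
    using e1 by (simp add: right_diff_distrib)
  then have gap: "real q * (real d - th * n) \<ge> 1" using g1 by simp
  have Cbd: "real (card C0) \<le> real q * d"
  proof -
    have "real (card C0) \<le> real (card C0) * (real q * (real d - th * n))"
      using gap by (metis mult_le_cancel_left1 of_nat_0_le_iff linorder_not_less order.strict_iff_not)
    also have "\<dots> = real q * (real (card C0) * (real d - th * n))" by (simp add: algebra_simps)
    also have "\<dots> \<le> real q * d" using pl q by (intro mult_left_mono) auto
    finally show ?thesis .
  qed
  define dl where "dl = th * real n - real t"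
  have lnpos: "ln (real n) > 0" using n by simp
  have sq: "sqrt (real n * ln (real n)) > 0" using n lnpos by simp
  have dl8: "dl \<ge> 8 * sqrt (real n * ln (real n))" using tup unfolding dl_def th_def by simp
  have dlpos: "dl > 0" using dl8 sq by linarith
  have thn: "th * real n \<le> real n" using th mult_right_mono[of th 1 "real n"] by simp
  have dln: "dl \<le> n" using thn unfolding dl_def by simp
  have Vt: "V_ball q n t / real q ^ n \<le> exp (- (dl^2) / (8 * real n))"
    using V_tail[OF q _ dlpos dln] n unfolding dl_def th_def by simp
  have "dl^2 \<ge> (8 * sqrt (real n * ln (real n)))^2"
    using dl8 sq by (intro power_mono) auto
  also have "(8 * sqrt (real n * ln (real n)))^2 = 64 * (real n * ln (real n))"
    using n lnpos by (simp add: power_mult_distrib)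
  finally have "dl^2 / (8 * real n) \<ge> 8 * ln (real n)" using n by (simp add: field_simps)
  then have "exp (- (dl^2) / (8 * real n)) \<le> exp (- (8 * ln (real n)))" by simp
  also have "\<dots> = 1 / real n ^ 8" using exp_ln8 n by simp
  finally have Vn: "V_ball q n t / real q ^ n \<le> 1 / real n ^ 8" using Vt by linarith
  have tn: "real t \<le> real n" using thn dlpos unfolding dl_def by simp
  have dn: "real d \<le> 2 * real n + 1" using tn unfolding d_def by simp
  have "real n * real (card C0) * V_ball q n t / real q ^ n = real n * real (card C0) * (V_ball q n t / real q ^ n)"
    by simp
  also have "\<dots> \<le> real n * (real q * (2 * real n + 1)) * (1 / real n ^ 8)"
  proof (rule mult_mono)
    have "real (card C0) \<le> real q * (2 * real n + 1)"
      using Cbd dn q by (smt (verit) mult_left_mono of_nat_0_le_iff)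
    then show "real n * real (card C0) \<le> real n * (real q * (2 * real n + 1))"
      by (intro mult_left_mono) auto
    show "V_ball q n t / real q ^ n \<le> 1 / real n ^ 8" by (rule Vn)
    show "0 \<le> real n * (real q * (2 * real n + 1))" by simp
    show "0 \<le> V_ball q n t / real q ^ n" using V_pos[OF q, of n t] by simp
  qed
  also have "\<dots> \<le> real q * (Pn n / real n ^ 8)"
    unfolding Pn_def using n by (simp add: field_simps)
  finally show ?thesis .
qed

lemma fk_bound:
  fixes f t :: real and n k :: nat
  assumes f0: "0 \<le> f" and f1: "f \<le> 1/2" and f3: "f \<le> 3 * t / n"
    and k25: "25 \<le> k" and kl: "t^2 / (4 * real n) < real k + 1" and n: "n > 0" and t0: "t \<ge> 0"
  shows "f ^ k \<le> 3^25 / real n ^ 10 + 2 powr (1 - root 5 (real n) / 4)"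
proof (cases "t^5 \<le> real n ^ 3")
  case True
  have "f ^ k \<le> f ^ 25" using f0 f1 k25 by (intro power_decreasing) auto
  also have "\<dots> \<le> (3 * t / n) ^ 25" using f0 f3 by (intro power_mono) auto
  also have "\<dots> = 3^25 * (t^5)^5 / real n ^ 25" by (simp add: power_divide power_mult_distrib power_mult[symmetric])
  also have "\<dots> \<le> 3^25 * (real n ^ 3)^5 / real n ^ 25"
    using True t0 by (intro divide_right_mono mult_left_mono power_mono) auto
  also have "\<dots> = 3^25 / real n ^ 10" using n by (simp add: field_simps power_mult[symmetric] power_add[symmetric])
  finally show ?thesis by (smt (verit) powr_gt_zero)
next
  case False
  then have t5: "t^5 > real n ^ 3" by simp
  have "(t^2 / n)^5 = (t^5)^2 / real n ^ 5" by (simp add: power_divide power_mult[symmetric])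
  also have "(t^5)^2 > (real n ^ 3)^2" using t5 n by (intro power_strict_mono) auto
  then have "(t^5)^2 / real n ^ 5 > (real n ^ 3)^2 / real n ^ 5" using n by (intro divide_strict_right_mono) auto
  also have "(real n ^ 3)^2 / real n ^ 5 = real n" using n by (simp add: eval_nat_numeral field_simps)
  finally have "real n < (t^2 / n)^5" .
  then have "root 5 (real n) < root 5 ((t^2 / n)^5)" by (intro real_root_less_mono) auto
  also have "\<dots> = t^2 / n" using t0 by (intro real_root_power_cancel) auto
  finally have rt: "root 5 (real n) < t^2 / n" .
  have eq4: "t^2 / real n = 4 * (t^2 / (4 * real n))" by simp
  have h4: "4 * (t^2 / (4 * real n)) < 4 * (real k + 1)" using kl by (rule mult_strict_left_mono) simp
  have "t^2 / n < 4 * (real k + 1)" unfolding eq4 by (rule h4)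
  then have "root 5 (real n) < 4 * (real k + 1)" using rt by (rule_tac order.strict_trans[OF rt]) 
  then have "root 5 (real n) / 4 - 1 < real k" by (simp add: field_simps)
  then have ex: "- real k \<le> 1 - root 5 (real n) / 4" by linarith
  have "f ^ k \<le> (1/2) ^ k" using f0 f1 by (intro power_mono) auto
  also have "(1/2::real) ^ k = 2 powr (- real k)" by (simp add: powr_minus powr_realpow power_divide inverse_eq_divide)
  also have "\<dots> \<le> 2 powr (1 - root 5 (real n) / 4)" using ex by (intro powr_mono) auto
  finally show ?thesis using n by (smt (verit) divide_nonneg_nonneg zero_le_power of_nat_0_le_iff)
qed

lemma elias_case:
  assumes q: "q \<ge> 2" and n: "n \<ge> 2" and C0: "C0 \<subseteq> words q n"
    and dist: "\<forall>x\<in>C0. \<forall>y\<in>C0. x \<noteq> y \<longrightarrow> 2 * t + 1 \<le> hamming x y"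
    and tlow: "10 * sqrt (real n) < real t"
    and small: "real (2 * t + 1) \<le> (1 - 1 / real q) * real n"
  shows "real n * real (card C0) * V_ball q n t / real q ^ n
     \<le> Pn n * 3^25 / real n ^ 10 + Pn n * 2 powr (1 - root 5 (real n) / 4)"
proof -
  define th where "th = 1 - 1 / real q"
  have th: "0 < th" "th \<le> 1" using q by (auto simp: th_def)
  have n0: "n > 0" and rn: "real n > 0" using n by auto
  have thn: "th * real n \<le> real n" using th mult_right_mono[of th 1 "real n"] by simp
  have t2n: "2 * real t + 1 \<le> th * real n" using small unfolding th_def by simp
  have tn2: "real t \<le> real n / 2" using t2n thn by simp
  have "10 * sqrt (real n) \<ge> 0" by simp
  then have t0: "real t > 0" using tlow by linarith
  have "(10 * sqrt (real n))^2 < (real t)^2" using tlow by (intro power_strict_mono) auto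
  then have "100 * real n < (real t)^2" by (simp add: power_mult_distrib)
  then have "real (100 * n) < real (t^2)" by simp
  then have t100: "100 * n < t^2" by (simp only: of_nat_less_iff)
  define k where "k = t^2 div (4 * n)"
  have "25 * (4 * n) div (4 * n) \<le> t^2 div (4 * n)" using t100 by (intro div_le_mono) simp
  then have k25: "25 \<le> k" unfolding k_def using n0 by simp
  have "k * (4 * n) \<le> t^2" unfolding k_def by (rule div_times_less_eq_dividend)
  then have "real (k * (4 * n)) \<le> real (t^2)" by (simp only: of_nat_le_iff)
  then have k4: "4 * real n * real k \<le> (real t)^2" by (simp add: algebra_simps)
  have "t^2 div (4 * n) * (4 * n) + t^2 mod (4 * n) = t^2" by (rule div_mult_mod_eq)
  moreover have "t^2 mod (4 * n) < 4 * n" using n0 by simp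
  ultimately have "t^2 < (k + 1) * (4 * n)" unfolding k_def by (simp add: algebra_simps)
  then have "real (t^2) < real ((k + 1) * (4 * n))" by (simp only: of_nat_less_iff)
  then have "(real t)^2 < (real k + 1) * (4 * real n)" by (simp add: algebra_simps)
  then have kl: "(real t)^2 / (4 * real n) < real k + 1" using rn by (simp add: divide_less_eq)
  have k8: "8 * real k \<le> real t"
  proof -
    have "(real t)^2 \<le> real t * (real n / 2)" using tn2 t0 by (simp add: power2_eq_square mult_left_mono)
    then have "4 * real n * real k \<le> real t * (real n / 2)" using k4 by linarith
    then have "real n * (8 * real k) \<le> real n * real t" by (simp add: algebra_simps)
    then show ?thesis using rn by simp
  qed
  define w where "w = t + k"
  have w98: "real w \<le> 9 / 8 * real t" using k8 unfolding w_def by simp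
  have wn: "real w \<le> 9 / 16 * real n" using w98 tn2 by simp
  have "real w < real n" using wn rn by linarith
  then have wltn: "w < n" by (simp only: of_nat_less_iff)
  obtain z where z: "z \<in> words q n"
    and avg: "card C0 * ((n choose w) * (q - 1) ^ w) \<le> card {c\<in>C0. hamming c z = w} * q ^ n"
    using averaging[of q C0 n w] q C0 by auto
  define Bz where "Bz = {c\<in>C0. hamming c z = w}"
  have BzW: "Bz \<subseteq> words q n" using C0 unfolding Bz_def by auto
  have Bzd: "\<forall>x\<in>Bz. \<forall>y\<in>Bz. x \<noteq> y \<longrightarrow> 2 * t + 1 \<le> hamming x y" using dist unfolding Bz_def by auto
  have Bzs: "\<forall>x\<in>Bz. hamming x z = w" unfolding Bz_def by auto
  have js: "real (card Bz) * (real (2 * t + 1) - 2 * real w + real w ^ 2 / real n) \<le> real (2 * t + 1)"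
    using johnson_sphere[OF q n0 BzW z Bzd Bzs] by simp
  have jg: "real (2 * t + 1) - 2 * real w + real w ^ 2 / real n \<ge> 1"
  proof -
    have "(real t)^2 \<le> (real w)^2" unfolding w_def using t0 by (intro power_mono) auto
    then have "(real t)^2 / real n \<le> (real w)^2 / real n" using rn by (intro divide_right_mono) auto
    moreover have "4 * real k \<le> (real t)^2 / real n" using k4 rn by (simp add: le_divide_eq algebra_simps)
    moreover have "real (2 * t + 1) - 2 * real w = 1 - 2 * real k" unfolding w_def by simp
    ultimately show ?thesis by simp
  qed
  have cBz: "real (card Bz) \<le> real (2 * t + 1)"
  proof -
    have "real (card Bz) \<le> real (card Bz) * (real (2 * t + 1) - 2 * real w + real w ^ 2 / real n)"
      using jg mult_left_mono[of 1 _ "real (card Bz)"] by simp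
    then show ?thesis using js by linarith
  qed
  have SwE: "Sw q n w = real ((n choose w) * (q - 1) ^ w)"
    unfolding Sw_def using q by (simp add: of_nat_diff)
  have Swpos: "Sw q n w > 0" unfolding Sw_def using q wltn by simp
  have CS: "real (card C0) * Sw q n w \<le> real (2 * t + 1) * real q ^ n"
  proof -
    have "real (card C0) * Sw q n w = real (card C0 * ((n choose w) * (q - 1) ^ w))" using SwE by simp
    also have "\<dots> \<le> real (card Bz * q ^ n)" using avg unfolding Bz_def by (simp only: of_nat_le_iff)
    also have "\<dots> = real (card Bz) * real q ^ n" by simp
    also have "\<dots> \<le> real (2 * t + 1) * real q ^ n" using cBz by (intro mult_right_mono) auto
    finally show ?thesis .
  qed
  define f where "f = real w / ((real n - real w) * (real q - 1))"
  have nw: "real n - real w \<ge> 7 / 16 * real n" using wn by simp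
  have nwpos: "real n - real w > 0" using nw rn by simp
  have q1: "real q - 1 \<ge> 1" using q by simp
  have f0: "f \<ge> 0" unfolding f_def using nwpos q1 by simp
  have fw: "f \<le> real w / (real n - real w)"
    unfolding f_def using nwpos q1 by (intro divide_left_mono) (auto intro: mult_pos_pos)
  have f3: "f \<le> 3 * real t / real n"
  proof -
    have a: "real w * real n \<le> 9 / 8 * real t * real n" using w98 rn by (intro mult_right_mono) auto
    have b: "3 * real t * (7 / 16 * real n) \<le> 3 * real t * (real n - real w)" using nw t0 by (intro mult_left_mono) auto
    have c: "9 / 8 * real t * real n \<le> 3 * real t * (7 / 16 * real n)" using t0 rn by simp
    have "real w * real n \<le> 3 * real t * (real n - real w)" using a b c by linarith
    then have "real w / (real n - real w) \<le> 3 * real t / real n"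
      using nwpos rn by (simp add: divide_le_eq le_divide_eq mult.commute)
    then show ?thesis using fw by linarith
  qed
  have f1: "f \<le> 1 / 2"
  proof -
    have tq: "real t \<le> th * real n / 2" using t2n by simp
    have w1: "real w \<le> 9 / 16 * (th * real n)" using w98 tq by simp
    have "(real q + 1) * real w \<le> (real q + 1) * (9 / 16 * (th * real n))"
      using w1 by (intro mult_left_mono) auto
    also have "(real q + 1) * (9 / 16 * (th * real n)) = (9 * (real q + 1) / (16 * real q)) * ((real q - 1) * real n)"
      using q by (simp add: th_def field_simps)
    also have "\<dots> \<le> 1 * ((real q - 1) * real n)"
    proof (rule mult_right_mono)
      show "9 * (real q + 1) / (16 * real q) \<le> 1" using q by (simp add: divide_le_eq)
      show "0 \<le> (real q - 1) * real n" using q1 by simp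
    qed
    finally have "(real q + 1) * real w \<le> (real q - 1) * real n" by simp
    then have "2 * real w \<le> (real n - real w) * (real q - 1)" by (simp add: algebra_simps)
    then show ?thesis unfolding f_def using nwpos q1 by (simp add: divide_le_eq mult_pos_pos)
  qed
  have Vle: "V_ball q n t \<le> (real t + 1) * f ^ k * Sw q n w"
    using V_le[OF q w_def wltn f_def] f1 by simp
  have fk0: "f ^ k \<ge> 0" using f0 by simp
  have "real n * real (card C0) * V_ball q n t / real q ^ n
      \<le> real n * real (card C0) * ((real t + 1) * f ^ k * Sw q n w) / real q ^ n"
    using Vle by (intro divide_right_mono mult_left_mono) auto
  also have "\<dots> = real n * (real t + 1) * f ^ k * (real (card C0) * Sw q n w) / real q ^ n"
    by (simp add: algebra_simps)
  also have "\<dots> \<le> real n * (real t + 1) * f ^ k * (real (2 * t + 1) * real q ^ n) / real q ^ n"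
    using CS fk0 t0 by (intro divide_right_mono mult_left_mono) auto
  also have "\<dots> = real n * (real t + 1) * real (2 * t + 1) * f ^ k" using q by simp
  also have "\<dots> \<le> Pn n * f ^ k"
  proof (rule mult_right_mono[OF _ fk0])
    have "real n * (real t + 1) \<le> real n * (real n + 1)" using tn2 by (intro mult_left_mono) auto
    moreover have "real (2 * t + 1) \<le> 2 * real n + 1" using tn2 by simp
    ultimately show "real n * (real t + 1) * real (2 * t + 1) \<le> Pn n"
      unfolding Pn_def using tn2 by (intro mult_mono) auto
  qed
  also have "\<dots> \<le> Pn n * (3^25 / real n ^ 10 + 2 powr (1 - root 5 (real n) / 4))"
  proof (rule mult_left_mono)
    show "f ^ k \<le> 3^25 / real n ^ 10 + 2 powr (1 - root 5 (real n) / 4)"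
      using fk_bound[OF f0 f1 f3 k25 kl n0] t0 by simp
    show "0 \<le> Pn n" unfolding Pn_def by simp
  qed
  also have "\<dots> = Pn n * 3^25 / real n ^ 10 + Pn n * 2 powr (1 - root 5 (real n) / 4)"
    by (simp add: algebra_simps)
  finally show ?thesis .
qed

lemma bound_F:
  assumes q: "q \<ge> 2" and n: "n \<ge> 2" and tlow: "10 * sqrt (real n) < real t"
    and tup: "real t \<le> (1 - 1 / real q) * real n - 8 * sqrt (real n * ln (real n))"
  shows "0 \<le> real n * real (A_code q n (2 * t + 1)) / H_bound q n t \<and>
         real n * real (A_code q n (2 * t + 1)) / H_bound q n t \<le> gb q n"
proof -
  obtain C0 where C0: "C0 \<subseteq> words q n" and dist: "\<forall>x\<in>C0. \<forall>y\<in>C0. x \<noteq> y \<longrightarrow> 2 * t + 1 \<le> hamming x y"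
    and A: "A_code q n (2 * t + 1) = card C0"
    using A_obtain[of q n "2 * t + 1"] by blast
  have Vp: "V_ball q n t > 0" using V_pos[OF q] by simp
  have eq: "real n * real (A_code q n (2 * t + 1)) / H_bound q n t = real n * real (card C0) * V_ball q n t / real q ^ n"
    unfolding A H_bound_def using Vp by simp
  have P0: "Pn n \<ge> 0" unfolding Pn_def by simp
  have g1: "0 \<le> real q * (Pn n / real n ^ 8)" using P0 by simp
  have g2: "0 \<le> Pn n * 3^25 / real n ^ 10" using P0 by simp
  have g3: "0 \<le> Pn n * 2 powr (1 - root 5 (real n) / 4)" using P0 by simp
  have "real n * real (card C0) * V_ball q n t / real q ^ n \<le> gb q n"
  proof (cases "real (2 * t + 1) > (1 - 1 / real q) * real n")
    case True
    have "real n * real (card C0) * V_ball q n t / real q ^ n \<le> real q * (Pn n / real n ^ 8)"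
      by (rule plotkin_case[OF q n C0 dist tup True])
    then show ?thesis unfolding gb_def using g2 g3 by linarith
  next
    case False
    have "real n * real (card C0) * V_ball q n t / real q ^ n
       \<le> Pn n * 3^25 / real n ^ 10 + Pn n * 2 powr (1 - root 5 (real n) / 4)"
      using elias_case[OF q n C0 dist tlow] False by simp
    then show ?thesis unfolding gb_def using g1 by linarith
  qed
  moreover have "0 \<le> real n * real (card C0) * V_ball q n t / real q ^ n" using Vp by simp
  ultimately show ?thesis unfolding eq by simp
qed

lemma gb_lim: "((\<lambda>n. gb q n) \<longlongrightarrow> 0) at_top"
proof -
  have "((\<lambda>n. real q * (Pn n / real n ^ 8) + Pn n * 3^25 / real n ^ 10 + Pn n * 2 powr (1 - root 5 (real n) / 4)) \<longlongrightarrow> real q * 0 + 0 + 0) at_top"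
    unfolding Pn_def
    by (intro tendsto_add tendsto_mult tendsto_const lim1)
       (use lim2 lim3 in \<open>simp_all add: mult_ac\<close>)
  then show ?thesis unfolding gb_def by simp
qed

theorem proposition5p2:
  fixes q :: nat
  assumes "q \<ge> 2"
  shows "\<exists>C::real. C > 0 \<and>
    ((\<lambda>n::nat. SUP t \<in> {t::nat. 10 * sqrt (real n) < real t \<and>
                  real t \<le> (1 - 1 / real q) * real n - C * sqrt (real n * ln (real n))}.
        real n * real (A_code q n (2 * t + 1)) / H_bound q n t) \<longlonglongrightarrow> 0)"
proof (intro exI conjI)
  have q: "q \<ge> 2" by (rule assms)
  show "(8::real) > 0" by simp
  define T where "T = (\<lambda>n::nat. {t::nat. 10 * sqrt (real n) < real t \<and>
                  real t \<le> (1 - 1 / real q) * real n - 8 * sqrt (real n * ln (real n))})"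
  define F where "F = (\<lambda>n t. real n * real (A_code q n (2 * t + 1)) / H_bound q n t)"
  have key: "0 \<le> (SUP t\<in>T n. F n t) \<and> (SUP t\<in>T n. F n t) \<le> gb q n"
    if n: "n \<ge> 2" and ev: "10 * sqrt (real n) + 8 * sqrt (real n * ln (real n)) + 1 < real n / 2" for n
  proof -
    define X where "X = (1 - 1 / real q) * real n - 8 * sqrt (real n * ln (real n))"
    have th2: "(1 - 1 / real q) \<ge> 1 / 2" using q by (simp add: field_simps)
    define Y where "Y = (1 - 1 / real q) * real n"
    define s1 where "s1 = sqrt (real n)"
    define s2 where "s2 = sqrt (real n * ln (real n))"
    have "Y \<ge> 1 / 2 * real n" unfolding Y_def using th2 by (intro mult_right_mono) auto
    moreover have "X = Y - 8 * s2" unfolding X_def Y_def s2_def ..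
    moreover have "10 * s1 + 8 * s2 + 1 < real n / 2" using ev unfolding s1_def s2_def .
    ultimately have "X > 10 * s1 + 1" by linarith
    then have Xb: "X > 10 * sqrt (real n) + 1" unfolding s1_def .
    have sq0: "10 * sqrt (real n) \<ge> 0" by simp
    define t0 where "t0 = nat \<lfloor>X\<rfloor>"
    have X0: "X \<ge> 0" using Xb sq0 by linarith
    have fl0: "\<lfloor>X\<rfloor> \<ge> 0" using X0 by simp
    have t0r: "real t0 = of_int \<lfloor>X\<rfloor>" unfolding t0_def using fl0 by simp
    have "real t0 \<le> X" using t0r of_int_floor_le[of X] by simp
    moreover have "real t0 > X - 1" using t0r real_of_int_floor_gt_diff_one[of X] by simp
    ultimately have t0T: "t0 \<in> T n" using Xb unfolding T_def X_def by auto
    then have ne: "T n \<noteq> {}" by auto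
    have thn: "(1 - 1 / real q) * real n \<le> real n" using q by (simp add: field_simps)
    have "T n \<subseteq> {..n}"
    proof
      fix t assume "t \<in> T n"
      then have tY: "real t \<le> Y - 8 * s2" unfolding T_def Y_def s2_def by simp
      have "s2 \<ge> 0" unfolding s2_def using n by simp
      then have "real t \<le> real n" using tY thn unfolding Y_def by linarith
      then show "t \<in> {..n}" by simp
    qed
    then have fin: "finite (T n)" using finite_subset by blast
    have bF: "0 \<le> F n t \<and> F n t \<le> gb q n" if "t \<in> T n" for t
      using bound_F[OF q n] that unfolding T_def F_def by auto
    have "0 \<le> (SUP t\<in>T n. F n t)"
      using bF t0T fin by (intro cSUP_upper2[of _ _ t0]) (auto intro: bdd_above_finite)
    moreover have "(SUP t\<in>T n. F n t) \<le> gb q n" using ne bF by (intro cSUP_least) auto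
    ultimately show ?thesis by simp
  qed
  have ev: "eventually (\<lambda>n. 0 \<le> (SUP t\<in>T n. F n t) \<and> (SUP t\<in>T n. F n t) \<le> gb q n) at_top"
    using eventually_conj[OF eventually_ge_at_top[of 2] ev1] key by (auto elim!: eventually_mono)
  have "((\<lambda>n. SUP t\<in>T n. F n t) \<longlongrightarrow> 0) at_top"
  proof (rule tendsto_sandwich[of "\<lambda>n. 0" _ _ "\<lambda>n. gb q n"])
    show "eventually (\<lambda>n. 0 \<le> (SUP t\<in>T n. F n t)) at_top" using ev by (auto elim: eventually_mono)
    show "eventually (\<lambda>n. (SUP t\<in>T n. F n t) \<le> gb q n) at_top" using ev by (auto elim: eventually_mono)
  qed (auto intro: gb_lim)
  then show "((\<lambda>n::nat. SUP t \<in> {t::nat. 10 * sqrt (real n) < real t \<and>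
                  real t \<le> (1 - 1 / real q) * real n - 8 * sqrt (real n * ln (real n))}.
        real n * real (A_code q n (2 * t + 1)) / H_bound q n t) \<longlonglongrightarrow> 0)"
    unfolding T_def F_def by simp
qed

end
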